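(* Let $G$ be a directed graph with vertices $s,t$ and $k\ge1$. For any $C_1,C_2\in L^*$ and any $e\in E(C_1)\cup E(C_2)$, it holds that $\max(\mu_e(C_1\vee C_2),\mu_e(C_1\wedge C_2))\le\max(\mu_e(C_1),\mu_e(C_2))$.
   Context: An $s$-$t$ cut of a directed graph $G$ is a set $X\subseteq E(G)$ such that removing $X$ leaves no directed $s$-$t$ path; $\Gamma_G(s,t)$ is the set of $s$-$t$ cuts of minimum cardinality. Fix a maximum-size collection $\mathcal P$ of pairwise edge-disjoint directed $s$-$t$ paths (each minimum $s$-$t$ cut contains exactly one edge of each path in $\mathcal P$). For $X,Y\in\Gamma_G(s,t)$, $S_{\min}(X\cup Y)$ (resp. $S_{\max}(X\cup Y)$) consists, for each $p\in\mathcal P$, of the edge of $(X\cup Y)\cap p$ occurring first (resp. last) along $p$. $X\le Y$ means every directed $s$-$t$ path meets an edge of $X$ at or before an edge of $Y$. $U^k_{\mathrm{lr}}$ is the set of $k$-tuples $[X_1,\dots,X_k]$ of elements of $\Gamma_G(s,t)$ with $X_i\le X_j$ for all $i<j$. $L^*$ is the lattice on $U^k_{\mathrm{lr}}$ with componentwise order, join $[X_i]_i\vee[Y_i]_i=[S_{\max}(X_i\cup Y_i)]_i$ and meet $[X_i]_i\wedge[Y_i]_i=[S_{\min}(X_i\cup Y_i)]_i$. For $C=[X_1,\dots,X_k]$, $E(C)=\bigcup_i X_i$ and $\mu_e(C)$ is the number of indices $i$ with $e\in X_i$. *)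

theory Defs
  imports "Graph_Theory.Graph_Theory"
begin

text \<open>Directed s-t paths are the arc paths (no repeated vertex) of the Graph_Theory library.\<close>

definition st_cut :: "('a,'b) pre_digraph \<Rightarrow> 'a \<Rightarrow> 'a \<Rightarrow> 'b set \<Rightarrow> bool" where
  "st_cut G s t X \<longleftrightarrow> X \<subseteq> arcs G \<and> (\<forall>p. pre_digraph.apath G s p t \<longrightarrow> set p \<inter> X \<noteq> {})"

definition min_cuts :: "('a,'b) pre_digraph \<Rightarrow> 'a \<Rightarrow> 'a \<Rightarrow> 'b set set" where
  "min_cuts G s t = {X. st_cut G s t X \<and> (\<forall>Y. st_cut G s t Y \<longrightarrow> card X \<le> card Y)}"

definition edge_disjoint_paths :: "('a,'b) pre_digraph \<Rightarrow> 'a \<Rightarrow> 'a \<Rightarrow> 'b list set \<Rightarrow> bool" where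
  "edge_disjoint_paths G s t P \<longleftrightarrow>
     (\<forall>p\<in>P. pre_digraph.apath G s p t) \<and>
     (\<forall>p\<in>P. \<forall>q\<in>P. p \<noteq> q \<longrightarrow> set p \<inter> set q = {})"

definition max_path_family :: "('a,'b) pre_digraph \<Rightarrow> 'a \<Rightarrow> 'a \<Rightarrow> 'b list set \<Rightarrow> bool" where
  "max_path_family G s t P \<longleftrightarrow> edge_disjoint_paths G s t P \<and> finite P \<and>
     (\<forall>Q. edge_disjoint_paths G s t Q \<and> finite Q \<longrightarrow> card Q \<le> card P)"

definition S_min :: "'b list set \<Rightarrow> 'b set \<Rightarrow> 'b set" where
  "S_min P Z = (\<lambda>p. hd (filter (\<lambda>e. e \<in> Z) p)) ` P"

definition S_max :: "'b list set \<Rightarrow> 'b set \<Rightarrow> 'b set" where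
  "S_max P Z = (\<lambda>p. last (filter (\<lambda>e. e \<in> Z) p)) ` P"

definition cut_le :: "('a,'b) pre_digraph \<Rightarrow> 'a \<Rightarrow> 'a \<Rightarrow> 'b set \<Rightarrow> 'b set \<Rightarrow> bool" where
  "cut_le G s t X Y \<longleftrightarrow> (\<forall>p. pre_digraph.apath G s p t \<longrightarrow>
      (\<exists>i<length p. p ! i \<in> X \<and> (\<forall>j<i. p ! j \<notin> Y)))"

definition U_lr :: "('a,'b) pre_digraph \<Rightarrow> 'a \<Rightarrow> 'a \<Rightarrow> nat \<Rightarrow> 'b set list set" where
  "U_lr G s t k = {C. length C = k \<and> (\<forall>i<k. C ! i \<in> min_cuts G s t) \<and>
      (\<forall>i j. i < j \<and> j < k \<longrightarrow> cut_le G s t (C ! i) (C ! j))}"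

definition tup_join :: "'b list set \<Rightarrow> 'b set list \<Rightarrow> 'b set list \<Rightarrow> 'b set list" where
  "tup_join P C D = map2 (\<lambda>X Y. S_max P (X \<union> Y)) C D"

definition tup_meet :: "'b list set \<Rightarrow> 'b set list \<Rightarrow> 'b set list \<Rightarrow> 'b set list" where
  "tup_meet P C D = map2 (\<lambda>X Y. S_min P (X \<union> Y)) C D"

definition tup_edges :: "'b set list \<Rightarrow> 'b set" where
  "tup_edges C = \<Union> (set C)"

definition mu :: "'b \<Rightarrow> 'b set list \<Rightarrow> nat" where
  "mu e C = card {i. i < length C \<and> e \<in> C ! i}"

end

theory Submission
  imports Defs
begin

definition bal :: "('a,'b) pre_digraph \<Rightarrow> 'b set \<Rightarrow> 'a \<Rightarrow> int" where
  "bal G A v = int (card {a\<in>A. tail G a = v}) - int (card {a\<in>A. head G a = v})"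

lemma walk_count:
  "pre_digraph.cas G u q w \<Longrightarrow>
   int (length (filter (\<lambda>x. tail G x = v) q)) - int (length (filter (\<lambda>x. head G x = v) q))
   = (if v = u then 1 else 0) - (if v = w then 1 else 0)"
proof (induction q arbitrary: u)
  case Nil
  then show ?case by (simp add: pre_digraph.cas.simps)
next
  case (Cons a q)
  then have "tail G a = u" "pre_digraph.cas G (head G a) q w" by (simp_all add: pre_digraph.cas.simps)
  with Cons.IH[of "head G a"] show ?case by auto
qed

lemma bal_path:
  assumes "pre_digraph.cas G u q w" "distinct q"
  shows "bal G (set q) v = (if v = u then 1 else 0) - (if v = w then 1 else 0)"
proof -
  have "length (filter (\<lambda>x. tail G x = v) q) = card {a\<in>set q. tail G a = v}"
    by (simp add: distinct_length_filter[OF assms(2)] Int_def conj_commute)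
  moreover have "length (filter (\<lambda>x. head G x = v) q) = card {a\<in>set q. head G a = v}"
    by (simp add: distinct_length_filter[OF assms(2)] Int_def conj_commute)
  ultimately show ?thesis using walk_count[OF assms(1), of v] by (simp add: bal_def)
qed

lemma card_fiber_sum:
  assumes "finite A" "finite S"
  shows "(\<Sum>v\<in>S. card {a\<in>A. f a = v}) = card {a\<in>A. f a \<in> S}"
proof -
  have "{a\<in>A. f a \<in> S} = (\<Union>v\<in>S. {a\<in>A. f a = v})" by auto
  moreover have "card (\<Union>v\<in>S. {a\<in>A. f a = v}) = (\<Sum>v\<in>S. card {a\<in>A. f a = v})"
    by (rule card_UN_disjoint) (use assms in auto)
  ultimately show ?thesis by simp
qed

lemma bal_sum:
  assumes "finite A" "finite S"
  shows "(\<Sum>v\<in>S. bal G A v) = int (card {a\<in>A. tail G a \<in> S \<and> head G a \<notin> S})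
          - int (card {a\<in>A. head G a \<in> S \<and> tail G a \<notin> S})"
proof -
  have "(\<Sum>v\<in>S. bal G A v) = (\<Sum>v\<in>S. int (card {a\<in>A. tail G a = v})) - (\<Sum>v\<in>S. int (card {a\<in>A. head G a = v}))"
    by (simp add: bal_def sum_subtractf)
  also have "\<dots> = int (\<Sum>v\<in>S. card {a\<in>A. tail G a = v}) - int (\<Sum>v\<in>S. card {a\<in>A. head G a = v})"
    by simp
  also have "\<dots> = int (card {a\<in>A. tail G a \<in> S}) - int (card {a\<in>A. head G a \<in> S})"
    using card_fiber_sum[OF assms, of "tail G"] card_fiber_sum[OF assms, of "head G"] by simp
  finally have 1: "(\<Sum>v\<in>S. bal G A v) = int (card {a\<in>A. tail G a \<in> S}) - int (card {a\<in>A. head G a \<in> S})" .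
  have e2: "{a\<in>A. tail G a \<in> S} = {a\<in>A. tail G a \<in> S \<and> head G a \<in> S} \<union> {a\<in>A. tail G a \<in> S \<and> head G a \<notin> S}" by auto
  have 2: "card {a\<in>A. tail G a \<in> S} = card {a\<in>A. tail G a \<in> S \<and> head G a \<in> S} + card {a\<in>A. tail G a \<in> S \<and> head G a \<notin> S}"
    unfolding e2 by (rule card_Un_disjoint) (use assms in auto)
  have e3: "{a\<in>A. head G a \<in> S} = {a\<in>A. tail G a \<in> S \<and> head G a \<in> S} \<union> {a\<in>A. head G a \<in> S \<and> tail G a \<notin> S}" by auto
  have 3: "card {a\<in>A. head G a \<in> S} = card {a\<in>A. tail G a \<in> S \<and> head G a \<in> S} + card {a\<in>A. head G a \<in> S \<and> tail G a \<notin> S}"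
    unfolding e3 by (rule card_Un_disjoint) (use assms in auto)
  show ?thesis using 1 2 3 by simp
qed

lemma bal_diff:
  fixes G :: "('v,'e) pre_digraph"
  assumes "finite A" "B \<subseteq> A"
  shows "bal G (A - B) v = bal G A v - bal G B v"
proof -
  have fB: "finite B" using assms finite_subset by blast
  have a: "{a\<in>A - B. f a = v} = {a\<in>A. f a = v} - {a\<in>B. f a = v}" for f :: "'e \<Rightarrow> 'v" by auto
  have b: "card ({a\<in>A. f a = v} - {a\<in>B. f a = v}) = card {a\<in>A. f a = v} - card {a\<in>B. f a = v}"
     "card {a\<in>B. f a = v} \<le> card {a\<in>A. f a = v}" for f :: "'e \<Rightarrow> 'v"
    using assms fB by (auto intro!: card_Diff_subset card_mono)
  show ?thesis unfolding bal_def a using b[of "tail G"] b[of "head G"] by simp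
qed

lemma bal_union:
  fixes G :: "('v,'e) pre_digraph"
  assumes "finite A" "finite B" "A \<inter> B = {}"
  shows "bal G (A \<union> B) v = bal G A v + bal G B v"
proof -
  have a: "{a\<in>A \<union> B. f a = v} = {a\<in>A. f a = v} \<union> {a\<in>B. f a = v}" for f :: "'e \<Rightarrow> 'v" by auto
  have b: "card ({a\<in>A. f a = v} \<union> {a\<in>B. f a = v}) = card {a\<in>A. f a = v} + card {a\<in>B. f a = v}" for f :: "'e \<Rightarrow> 'v"
    using assms by (intro card_Un_disjoint) auto
  show ?thesis unfolding bal_def a using b[of "tail G"] b[of "head G"] by simp
qed

lemma bal_UN:
  assumes "finite P" "\<forall>p\<in>P. \<forall>q\<in>P. p \<noteq> q \<longrightarrow> set p \<inter> set q = {}"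
  shows "bal G (\<Union>p\<in>P. set p) v = (\<Sum>p\<in>P. bal G (set p) v)"
  using assms
proof (induction P rule: finite_induct)
  case empty
  then show ?case by (simp add: bal_def)
next
  case (insert p P)
  have "bal G (\<Union>q\<in>insert p P. set q) v = bal G (set p \<union> (\<Union>q\<in>P. set q)) v" by simp
  also have "\<dots> = bal G (set p) v + bal G (\<Union>q\<in>P. set q) v"
    using insert by (intro bal_union) auto
  finally show ?case using insert by auto
qed

definition isflow :: "('a,'b) pre_digraph \<Rightarrow> 'a \<Rightarrow> 'a \<Rightarrow> 'b set \<Rightarrow> nat \<Rightarrow> bool" where
 "isflow G s t F m \<longleftrightarrow> F \<subseteq> arcs G \<and> (\<forall>v. v \<noteq> s \<and> v \<noteq> t \<longrightarrow> bal G F v = 0) \<and> bal G F s = int m"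

lemma extract_path:
  assumes fin: "fin_digraph G" and s: "s \<in> verts G" and st: "s \<noteq> t" and fl: "isflow G s t F (Suc m)"
  shows "\<exists>p. pre_digraph.apath G s p t \<and> set p \<subseteq> F"
proof -
  interpret fin_digraph G by fact
  define S where "S = {v. \<exists>q. awalk s q v \<and> set q \<subseteq> F}"
  have SV: "S \<subseteq> verts G" unfolding S_def using awalk_last_in_verts by blast
  have fS: "finite S" using SV finite_subset finite_verts by blast
  have sS: "s \<in> S" unfolding S_def using s by (auto simp: awalk_Nil_iff intro!: exI[of _ "[]"])
  have fF: "finite F" using fl finite_arcs finite_subset unfolding isflow_def by blast
  show ?thesis
  proof (cases "t \<in> S")
    case True
    then obtain q where q: "awalk s q t" "set q \<subseteq> F" unfolding S_def by blast
    show ?thesis using apath_awalk_to_apath[OF q(1)] awalk_to_apath_subset[OF q(1)] q(2) by blast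
  next
    case False
    have closed: "head G a \<in> S" if "a \<in> F" "tail G a \<in> S" for a
    proof -
      from that obtain q where q: "awalk s q (tail G a)" "set q \<subseteq> F" unfolding S_def by blast
      have "a \<in> arcs G" using that fl unfolding isflow_def by blast
      then have "awalk s (q @ [a]) (head G a)" using awalk_appendI[OF q(1) arc_implies_awalk] by blast
      then show ?thesis unfolding S_def using q(2) that(1) by (intro CollectI exI[of _ "q @ [a]"]) auto
    qed
    have E: "{a\<in>F. tail G a \<in> S \<and> head G a \<notin> S} = {}" using closed by auto
    have "(\<Sum>v\<in>S. bal G F v) \<le> 0" using bal_sum[OF fF fS, of G] unfolding E by simp
    moreover have "(\<Sum>v\<in>S. bal G F v) = bal G F s + (\<Sum>v\<in>S-{s}. bal G F v)" using sS fS by (simp add: sum.remove)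
    moreover have "(\<Sum>v\<in>S-{s}. bal G F v) = 0" using False fl unfolding isflow_def by (intro sum.neutral) auto
    ultimately show ?thesis using fl unfolding isflow_def by simp
  qed
qed

lemma flow_decomp:
  assumes fin: "fin_digraph G" and s: "s \<in> verts G" and st: "s \<noteq> t"
  shows "isflow G s t F m \<Longrightarrow> \<exists>Q. edge_disjoint_paths G s t Q \<and> finite Q \<and> card Q = m \<and> (\<forall>q\<in>Q. set q \<subseteq> F)"
proof (induction m arbitrary: F)
  case 0 then show ?case by (intro exI[of _ "{}"]) (simp add: edge_disjoint_paths_def)
next
  case (Suc m)
  interpret fin_digraph G by fact
  obtain p where p: "apath s p t" "set p \<subseteq> F" using extract_path[OF fin s st Suc.prems] by blast
  have fF: "finite F" using Suc.prems finite_arcs finite_subset unfolding isflow_def by blast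
  have dp: "distinct p" using p(1) distinct_verts_imp_distinct unfolding apath_def by blast
  have cp: "cas s p t" using p(1) unfolding apath_def awalk_def by blast
  have pne: "p \<noteq> []" using cp st by (cases p) auto
  define F' where "F' = F - set p"
  have "isflow G s t F' m"
  proof -
    have "bal G F' v = bal G F v - ((if v = s then 1 else 0) - (if v = t then 1 else 0))" for v
    proof -
      have "bal G F' v = bal G F v - bal G (set p) v" unfolding F'_def by (rule bal_diff[OF fF p(2)])
      then show ?thesis using bal_path[OF cp dp, of v] by simp
    qed
    then show ?thesis using Suc.prems st unfolding isflow_def F'_def by auto
  qed
  then obtain Q where Q: "edge_disjoint_paths G s t Q" "finite Q" "card Q = m" "\<forall>q\<in>Q. set q \<subseteq> F'"
    using Suc.IH by blast
  have pQ: "p \<notin> Q" using Q(4) pne unfolding F'_def by (cases p) auto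
  show ?case
    apply (intro exI[of _ "insert p Q"])
    using Q pQ p unfolding edge_disjoint_paths_def F'_def by auto
qed

definition resid :: "('a,'b) pre_digraph \<Rightarrow> 'b set \<Rightarrow> ('a, 'b \<times> bool) pre_digraph" where
 "resid G F = \<lparr>verts = verts G, arcs = (\<lambda>a. (a,True)) ` (arcs G - F) \<union> (\<lambda>a. (a,False)) ` F,
   tail = (\<lambda>x. if snd x then tail G (fst x) else head G (fst x)),
   head = (\<lambda>x. if snd x then head G (fst x) else tail G (fst x))\<rparr>"

lemma resid_simps[simp]:
  "verts (resid G F) = verts G"
  "arcs (resid G F) = (\<lambda>a. (a,True)) ` (arcs G - F) \<union> (\<lambda>a. (a,False)) ` F"
  "tail (resid G F) (a,True) = tail G a" "head (resid G F) (a,True) = head G a"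
  "tail (resid G F) (a,False) = head G a" "head (resid G F) (a,False) = tail G a"
  by (simp_all add: resid_def)

lemma resid_wf: "wf_digraph G \<Longrightarrow> F \<subseteq> arcs G \<Longrightarrow> wf_digraph (resid G F)"
  unfolding wf_digraph_def by (auto simp: resid_def)

lemma card_pair_img: "card {x\<in>(\<lambda>a. (a,b)) ` A. P x} = card {a\<in>A. P (a,b)}"
proof -
  have "{x\<in>(\<lambda>a. (a,b)) ` A. P x} = (\<lambda>a. (a,b)) ` {a\<in>A. P (a,b)}" by auto
  moreover have "inj_on (\<lambda>a. (a,b)) {a\<in>A. P (a,b)}" by (auto simp: inj_on_def)
  ultimately show ?thesis by (simp add: card_image)
qed

lemma bal_resid_T: "bal (resid G F) ((\<lambda>a. (a,True)) ` A) v = bal G A v"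
  unfolding bal_def card_pair_img by simp

lemma bal_resid_F: "bal (resid G F) ((\<lambda>a. (a,False)) ` A) v = - bal G A v"
  unfolding bal_def card_pair_img by simp

lemma cross:
  "pre_digraph.cas G u p w \<Longrightarrow> u \<in> R \<Longrightarrow> w \<notin> R \<Longrightarrow> \<exists>a\<in>set p. tail G a \<in> R \<and> head G a \<notin> R"
proof (induction p arbitrary: u)
  case Nil
  then show ?case by (simp add: pre_digraph.cas.simps)
next
  case (Cons a p)
  then have "tail G a = u" "pre_digraph.cas G (head G a) p w" by (simp_all add: pre_digraph.cas.simps)
  then show ?case using Cons by (cases "head G a \<in> R") auto
qed

lemma menger_cut:
  assumes fin: "fin_digraph G" and s: "s \<in> verts G" and st: "s \<noteq> t" and mp: "max_path_family G s t P"
  shows "\<exists>Z. st_cut G s t Z \<and> card Z \<le> card P"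
proof -
  interpret fin_digraph G by fact
  define F where "F = (\<Union>p\<in>P. set p)"
  have ed: "edge_disjoint_paths G s t P" and fP: "finite P" using mp unfolding max_path_family_def by auto
  have Fa: "F \<subseteq> arcs G"
  proof
    fix a assume "a \<in> F"
    then obtain p where "p \<in> P" "a \<in> set p" unfolding F_def by blast
    then have "apath s p t" using ed by (simp add: edge_disjoint_paths_def)
    then show "a \<in> arcs G" using \<open>a \<in> set p\<close> by (auto simp: apath_def awalk_def)
  qed
  have fF: "finite F" by (rule finite_subset[OF Fa finite_arcs])
  have balF: "bal G F v = int (card P) * ((if v = s then 1 else 0) - (if v = t then 1 else 0))" for v
  proof -
    have "bal G F v = (\<Sum>p\<in>P. bal G (set p) v)" unfolding F_def
      by (rule bal_UN[OF fP]) (use ed in \<open>auto simp: edge_disjoint_paths_def\<close>)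
    also have "\<dots> = (\<Sum>p\<in>P. (if v = s then 1 else 0) - (if v = t then 1 else 0))"
    proof (rule sum.cong)
      fix p assume "p \<in> P"
      then have ap: "apath s p t" using ed unfolding edge_disjoint_paths_def by blast
      then have "cas s p t" "distinct p" using distinct_verts_imp_distinct unfolding apath_def awalk_def by blast+
      then show "bal G (set p) v = (if v = s then 1 else 0) - (if v = t then 1 else 0)" by (rule bal_path)
    qed simp
    finally show ?thesis by simp
  qed
  define H where "H = resid G F"
  interpret H: wf_digraph H unfolding H_def by (rule resid_wf) (use Fa wf_digraph in auto)
  define R where "R = {v. \<exists>q. H.awalk s q v}"
  have "H.awalk s [] s" unfolding H.awalk_Nil_iff using s by (simp add: H_def)
  then have sR: "s \<in> R" unfolding R_def by blast
  have RV: "R \<subseteq> verts G"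
  proof
    fix v assume "v \<in> R"
    then obtain q where "H.awalk s q v" unfolding R_def by blast
    then have "v \<in> verts H" by (rule H.awalk_last_in_verts)
    then show "v \<in> verts G" by (simp add: H_def)
  qed
  have fR: "finite R" by (rule finite_subset[OF RV finite_verts])
  show ?thesis
  proof (cases "t \<in> R")
    case True
    then obtain q where q: "H.awalk s q t" unfolding R_def by blast
    then obtain q' where aq: "H.apath s q' t" using H.apath_awalk_to_apath by blast
    then have cq: "H.cas s q' t" and dq: "distinct q'" and q'H: "set q' \<subseteq> arcs H"
      using H.distinct_verts_imp_distinct unfolding H.apath_def H.awalk_def by blast+
    define Bk where "Bk = {a. (a,False) \<in> set q'}"
    define Fw where "Fw = {a. (a,True) \<in> set q'}"
    have BkF: "Bk \<subseteq> F" using q'H unfolding Bk_def H_def by auto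
    have FwA: "Fw \<subseteq> arcs G - F" using q'H unfolding Fw_def H_def by auto
    have setq: "set q' = (\<lambda>a. (a,True)) ` Fw \<union> (\<lambda>a. (a,False)) ` Bk"
    proof
      show "set q' \<subseteq> (\<lambda>a. (a,True)) ` Fw \<union> (\<lambda>a. (a,False)) ` Bk"
      proof
        fix x assume x: "x \<in> set q'"
        obtain a b where ab: "x = (a,b)" by (cases x)
        show "x \<in> (\<lambda>a. (a,True)) ` Fw \<union> (\<lambda>a. (a,False)) ` Bk"
          using x unfolding ab Fw_def Bk_def by (cases b) auto
      qed
      show "(\<lambda>a. (a,True)) ` Fw \<union> (\<lambda>a. (a,False)) ` Bk \<subseteq> set q'" by (auto simp: Fw_def Bk_def)
    qed
    have fBk: "finite Bk" by (rule finite_subset[OF BkF fF])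
    have fFw: "finite Fw" using FwA finite_subset finite_arcs by blast
    define F' where "F' = (F - Bk) \<union> Fw"
    have balF': "bal G F' v = bal G F v + bal H (set q') v" for v
    proof -
      have "bal G F' v = bal G (F - Bk) v + bal G Fw v"
        unfolding F'_def by (rule bal_union) (use fF fFw FwA in auto)
      also have "\<dots> = bal G F v - bal G Bk v + bal G Fw v" using bal_diff[OF fF BkF] by simp
      finally have 1: "bal G F' v = bal G F v - bal G Bk v + bal G Fw v" .
      have "bal H (set q') v = bal H ((\<lambda>a. (a,True)) ` Fw) v + bal H ((\<lambda>a. (a,False)) ` Bk) v"
        unfolding setq by (rule bal_union) (use fFw fBk in auto)
      also have "\<dots> = bal G Fw v - bal G Bk v" unfolding H_def bal_resid_T bal_resid_F by simp
      finally show ?thesis using 1 by simp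
    qed
    have "bal H (set q') v = (if v = s then 1 else 0) - (if v = t then 1 else 0)" for v
      by (rule bal_path[OF cq dq])
    then have "isflow G s t F' (Suc (card P))"
      unfolding isflow_def using balF' balF Fa FwA st by (auto simp: F'_def)
    then obtain Q where Q: "edge_disjoint_paths G s t Q" "finite Q" "card Q = Suc (card P)"
      using flow_decomp[OF fin s st] by blast
    then have False using mp unfolding max_path_family_def by fastforce
    then show ?thesis ..
  next
    case False
    define Z where "Z = {a\<in>F. tail G a \<in> R \<and> head G a \<notin> R}"
    have c1: "a \<in> F" if "a \<in> arcs G" "tail G a \<in> R" "head G a \<notin> R" for a
    proof (rule ccontr)
      assume "a \<notin> F"
      then have arc: "(a,True) \<in> arcs H" using that unfolding H_def by auto
      from that obtain q where q: "H.awalk s q (tail G a)" unfolding R_def by blast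
      have "H.awalk s (q @ [(a,True)]) (head H (a,True))"
        using H.awalk_appendI[OF _ H.arc_implies_awalk[OF arc]] q by (simp add: H_def)
      then have "head G a \<in> R" unfolding R_def by (auto simp: H_def)
      then show False using that by blast
    qed
    have c2: "tail G a \<in> R" if "a \<in> F" "head G a \<in> R" for a
    proof -
      have arc: "(a,False) \<in> arcs H" using that unfolding H_def by auto
      from that obtain q where q: "H.awalk s q (head G a)" unfolding R_def by blast
      have "H.awalk s (q @ [(a,False)]) (head H (a,False))"
        using H.awalk_appendI[OF _ H.arc_implies_awalk[OF arc]] q by (simp add: H_def)
      then show "tail G a \<in> R" unfolding R_def by (auto simp: H_def)
    qed
    have cut: "st_cut G s t Z"
      unfolding st_cut_def
    proof (intro conjI allI impI)
      show "Z \<subseteq> arcs G" using Fa unfolding Z_def by auto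
      fix p assume "apath s p t"
      then have "cas s p t" "set p \<subseteq> arcs G" unfolding apath_def awalk_def by auto
      then obtain a where "a \<in> set p" "tail G a \<in> R" "head G a \<notin> R"
        using cross[of G s p t R] sR False by blast
      then show "set p \<inter> Z \<noteq> {}" using c1 \<open>set p \<subseteq> arcs G\<close> unfolding Z_def by blast
    qed
    have E: "{a\<in>F. head G a \<in> R \<and> tail G a \<notin> R} = {}" using c2 by blast
    have "(\<Sum>v\<in>R. bal G F v) = int (card Z)" using bal_sum[OF fF fR, of G] unfolding E Z_def by simp
    moreover have "(\<Sum>v\<in>R. bal G F v) = bal G F s + (\<Sum>v\<in>R-{s}. bal G F v)" using sR fR by (simp add: sum.remove)
    moreover have "(\<Sum>v\<in>R-{s}. bal G F v) = 0" using False balF by (intro sum.neutral) auto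
    ultimately have "card Z = card P" using balF[of s] st by simp
    then show ?thesis using cut by auto
  qed
qed

lemma unique_on_path:
  assumes fin: "fin_digraph G" and s: "s \<in> verts G" and st: "s \<noteq> t" and mp: "max_path_family G s t P"
    and X: "X \<in> min_cuts G s t" and p: "p \<in> P"
  shows "\<exists>x. set p \<inter> X = {x}"
proof -
  interpret fin_digraph G by fact
  obtain Z where Z: "st_cut G s t Z" "card Z \<le> card P" using menger_cut[OF fin s st mp] by blast
  have Xc: "st_cut G s t X" and XZ: "card X \<le> card Z" using X Z(1) unfolding min_cuts_def by auto
  have XA: "X \<subseteq> arcs G" using Xc unfolding st_cut_def by blast
  have fX: "finite X" by (rule finite_subset[OF XA finite_arcs])
  have ed: "edge_disjoint_paths G s t P" and fP: "finite P" using mp unfolding max_path_family_def by auto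
  have ne: "set q \<inter> X \<noteq> {}" if "q \<in> P" for q
    using that ed Xc unfolding edge_disjoint_paths_def st_cut_def by blast
  have "(\<Sum>q\<in>P. card (set q \<inter> X)) = card (\<Union>q\<in>P. set q \<inter> X)"
    by (rule card_UN_disjoint[symmetric]) (use fP ed in \<open>auto simp: edge_disjoint_paths_def\<close>)
  also have "\<dots> \<le> card X" by (rule card_mono[OF fX]) auto
  finally have sumle: "(\<Sum>q\<in>P. card (set q \<inter> X)) \<le> card P" using XZ Z(2) by linarith
  have ge1: "\<forall>q\<in>P. (1::nat) \<le> card (set q \<inter> X)"
    using ne fX by (simp add: Suc_le_eq card_gt_0_iff)
  have "card (set p \<inter> X) = 1"
  proof (rule ccontr)
    assume "card (set p \<inter> X) \<noteq> 1"
    then have "1 < card (set p \<inter> X)" using ge1 p by fastforce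
    then have "(\<Sum>q\<in>P. (1::nat)) < (\<Sum>q\<in>P. card (set q \<inter> X))"
      using sum_strict_mono_ex1[OF fP, of "\<lambda>_. 1" "\<lambda>q. card (set q \<inter> X)"] ge1 p by blast
    then show False using sumle by simp
  qed
  then show ?thesis by (simp add: card_1_singleton_iff)
qed

lemma hd_filter_nth:
  "\<exists>i<length p. Q (p!i) \<Longrightarrow> \<exists>i<length p. Q (p!i) \<and> (\<forall>j<i. \<not> Q (p!j)) \<and> hd (filter Q p) = p!i"
proof (induction p)
  case Nil
  then show ?case by simp
next
  case (Cons a p)
  show ?case
  proof (cases "Q a")
    case True
    then show ?thesis by (intro exI[of _ 0]) auto
  next
    case False
    from Cons.prems obtain i where i: "i < length (a#p)" "Q ((a#p)!i)" by blast
    with False obtain i' where "i = Suc i'" by (cases i) auto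
    with i have "\<exists>i<length p. Q (p!i)" by auto
    then obtain j where j: "j < length p" "Q (p!j)" "\<forall>j'<j. \<not> Q (p!j')" "hd (filter Q p) = p!j"
      using Cons.IH by blast
    show ?thesis
    proof (intro exI[of _ "Suc j"] conjI allI impI)
      fix j' assume "j' < Suc j"
      then show "\<not> Q ((a#p)!j')" using j False by (cases j') auto
    qed (use j False in auto)
  qed
qed

lemma last_filter_nth:
  "\<exists>i<length p. Q (p!i) \<Longrightarrow> \<exists>i<length p. Q (p!i) \<and> (\<forall>j. i < j \<and> j < length p \<longrightarrow> \<not> Q (p!j)) \<and> last (filter Q p) = p!i"
proof (induction p rule: rev_induct)
  case Nil
  then show ?case by simp
next
  case (snoc a p)
  show ?case
  proof (cases "Q a")
    case True
    then show ?thesis by (intro exI[of _ "length p"]) auto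
  next
    case False
    from snoc.prems obtain i where i: "i < length (p@[a])" "Q ((p@[a])!i)" by blast
    with False have "i < length p" by (cases "i < length p") (auto simp: nth_append)
    with i have "\<exists>i<length p. Q (p!i)" by (auto simp: nth_append)
    then obtain j where j: "j < length p" "Q (p!j)" "\<forall>j'. j < j' \<and> j' < length p \<longrightarrow> \<not> Q (p!j')" "last (filter Q p) = p!j"
      using snoc.IH by blast
    show ?thesis
    proof (intro exI[of _ j] conjI allI impI)
      fix j' assume "j < j' \<and> j' < length (p@[a])"
      then show "\<not> Q ((p@[a])!j')" using j False by (cases "j' < length p") (auto simp: nth_append)
    qed (use j False in \<open>auto simp: nth_append\<close>)
  qed
qed

definition pos :: "'b list \<Rightarrow> 'b \<Rightarrow> nat" where
  "pos p x = (LEAST i. p ! i = x)"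

lemma pos_in:
  assumes "x \<in> set p" shows "pos p x < length p" "p ! pos p x = x"
proof -
  obtain i where i: "i < length p" "p ! i = x" using assms by (auto simp: in_set_conv_nth)
  show "p ! pos p x = x" unfolding pos_def by (rule LeastI[of _ i]) (use i in simp)
  have "pos p x \<le> i" unfolding pos_def by (rule Least_le) (use i in simp)
  then show "pos p x < length p" using i by simp
qed

lemma pos_nth: "distinct p \<Longrightarrow> i < length p \<Longrightarrow> pos p (p ! i) = i"
  using pos_in[of "p ! i" p] nth_eq_iff_index_eq by (metis nth_mem)

lemma pos_inj: "x \<in> set p \<Longrightarrow> y \<in> set p \<Longrightarrow> pos p x = pos p y \<Longrightarrow> x = y"
  using pos_in by metis

lemma comb_max:
  fixes a b :: "nat \<Rightarrow> nat"
  assumes ma: "\<forall>i j. i < j \<and> j < k \<longrightarrow> a i \<le> a j" and mb: "\<forall>i j. i < j \<and> j < k \<longrightarrow> b i \<le> b j"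
  shows "card {i. i < k \<and> max (a i) (b i) = c} \<le> max (card {i. i < k \<and> a i = c}) (card {i. i < k \<and> b i = c})"
proof -
  have "(\<forall>i<k. c \<le> b i \<longrightarrow> c \<le> a i) \<or> (\<forall>i<k. c \<le> a i \<longrightarrow> c \<le> b i)"
  proof (rule ccontr)
    assume "\<not> ?thesis"
    then obtain i j where ij: "i < k" "c \<le> b i" "a i < c" "j < k" "c \<le> a j" "b j < c" by auto
    show False
    proof (cases "i \<le> j")
      case True
      then have "b i \<le> b j" using mb ij by (cases "i = j") auto
      then show False using ij by simp
    next
      case False
      then have "a j \<le> a i" using ma ij by auto
      then show False using ij by simp
    qed
  qed
  then show ?thesis
  proof
    assume h: "\<forall>i<k. c \<le> b i \<longrightarrow> c \<le> a i"
    have "{i. i < k \<and> max (a i) (b i) = c} \<subseteq> {i. i < k \<and> a i = c}"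
      using h by (auto simp: max_def split: if_splits)
    then have "card {i. i < k \<and> max (a i) (b i) = c} \<le> card {i. i < k \<and> a i = c}" by (intro card_mono) auto
    then show ?thesis by simp
  next
    assume h: "\<forall>i<k. c \<le> a i \<longrightarrow> c \<le> b i"
    have "{i. i < k \<and> max (a i) (b i) = c} \<subseteq> {i. i < k \<and> b i = c}"
      using h by (auto simp: max_def split: if_splits)
    then have "card {i. i < k \<and> max (a i) (b i) = c} \<le> card {i. i < k \<and> b i = c}" by (intro card_mono) auto
    then show ?thesis by simp
  qed
qed

lemma comb_min:
  fixes a b :: "nat \<Rightarrow> nat"
  assumes ma: "\<forall>i j. i < j \<and> j < k \<longrightarrow> a i \<le> a j" and mb: "\<forall>i j. i < j \<and> j < k \<longrightarrow> b i \<le> b j"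
  shows "card {i. i < k \<and> min (a i) (b i) = c} \<le> max (card {i. i < k \<and> a i = c}) (card {i. i < k \<and> b i = c})"
proof -
  have "(\<forall>i<k. b i \<le> c \<longrightarrow> a i \<le> c) \<or> (\<forall>i<k. a i \<le> c \<longrightarrow> b i \<le> c)"
  proof (rule ccontr)
    assume "\<not> ?thesis"
    then obtain i j where ij: "i < k" "b i \<le> c" "c < a i" "j < k" "a j \<le> c" "c < b j" by auto
    show False
    proof (cases "i \<le> j")
      case True
      then have "a i \<le> a j" using ma ij by (cases "i = j") auto
      then show False using ij by simp
    next
      case False
      then have "b j \<le> b i" using mb ij by auto
      then show False using ij by simp
    qed
  qed
  then show ?thesis
  proof
    assume h: "\<forall>i<k. b i \<le> c \<longrightarrow> a i \<le> c"
    have "{i. i < k \<and> min (a i) (b i) = c} \<subseteq> {i. i < k \<and> a i = c}"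
      using h by (auto simp: min_def split: if_splits)
    then have "card {i. i < k \<and> min (a i) (b i) = c} \<le> card {i. i < k \<and> a i = c}" by (intro card_mono) auto
    then show ?thesis by simp
  next
    assume h: "\<forall>i<k. a i \<le> c \<longrightarrow> b i \<le> c"
    have "{i. i < k \<and> min (a i) (b i) = c} \<subseteq> {i. i < k \<and> b i = c}"
      using h by (auto simp: min_def split: if_splits)
    then have "card {i. i < k \<and> min (a i) (b i) = c} \<le> card {i. i < k \<and> b i = c}" by (intro card_mono) auto
    then show ?thesis by simp
  qed
qed

lemma path_pos:
  assumes fin: "fin_digraph G" and s: "s \<in> verts G" and st: "s \<noteq> t" and mp: "max_path_family G s t P"
    and C: "C \<in> U_lr G s t k" and p0: "p0 \<in> P"
  shows "\<exists>f. (\<forall>i<k. set p0 \<inter> C!i = {f i}) \<and> (\<forall>i j. i < j \<and> j < k \<longrightarrow> pos p0 (f i) \<le> pos p0 (f j))"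
proof -
  interpret fin_digraph G by fact
  have Cm: "\<forall>i<k. C!i \<in> min_cuts G s t" and Cl: "\<forall>i j. i < j \<and> j < k \<longrightarrow> cut_le G s t (C!i) (C!j)"
    using C unfolding U_lr_def by auto
  have "\<forall>i<k. \<exists>x. set p0 \<inter> C!i = {x}" using unique_on_path[OF fin s st mp _ p0] Cm by blast
  then obtain f where f: "\<forall>i<k. set p0 \<inter> C!i = {f i}" by metis
  have ap: "apath s p0 t" using mp p0 unfolding max_path_family_def edge_disjoint_paths_def by blast
  have dp: "distinct p0" using ap distinct_verts_imp_distinct unfolding apath_def by blast
  have "pos p0 (f i) \<le> pos p0 (f j)" if ij: "i < j" "j < k" for i j
  proof -
    have "cut_le G s t (C!i) (C!j)" using Cl ij by blast
    then obtain idx where idx: "idx < length p0" "p0!idx \<in> C!i" "\<forall>j'<idx. p0!j' \<notin> C!j"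
      using ap unfolding cut_le_def by blast
    have "p0!idx \<in> set p0 \<inter> C!i" using idx by auto
    then have "p0!idx = f i" using f ij by auto
    then have 1: "pos p0 (f i) = idx" using pos_nth[OF dp idx(1)] by simp
    have fj: "f j \<in> set p0 \<inter> C!j" using f ij by auto
    then have "p0 ! pos p0 (f j) \<in> C!j" using pos_in(2)[of "f j" p0] by simp
    then show ?thesis using idx(3) 1 by (meson not_le)
  qed
  then show ?thesis using f by blast
qed

theorem lemma4:
  fixes G :: "('a,'b) pre_digraph" and s t :: 'a and k :: nat
    and P :: "'b list set" and C1 C2 :: "'b set list" and e :: 'b
  assumes "fin_digraph G" and "s \<in> verts G" and "t \<in> verts G" and "k \<ge> 1"
    and "max_path_family G s t P"
    and "C1 \<in> U_lr G s t k" and "C2 \<in> U_lr G s t k"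
    and "e \<in> tup_edges C1 \<union> tup_edges C2"
  shows "max (mu e (tup_join P C1 C2)) (mu e (tup_meet P C1 C2))
           \<le> max (mu e C1) (mu e C2)"
proof -
  have fin: "fin_digraph G" by fact
  interpret fin_digraph G by fact
  have C1m: "length C1 = k" "\<forall>i<k. C1!i \<in> min_cuts G s t" using assms(6) unfolding U_lr_def by auto
  have C2m: "length C2 = k" "\<forall>i<k. C2!i \<in> min_cuts G s t" using assms(7) unfolding U_lr_def by auto
  have ed: "edge_disjoint_paths G s t P" using assms(5) unfolding max_path_family_def by auto
  have apP: "\<forall>p\<in>P. apath s p t" using ed unfolding edge_disjoint_paths_def by blast
  have st: "s \<noteq> t"
  proof
    assume "s = t"
    have "apath s [] s" using assms(2) by (simp add: apath_Nil_iff)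
    moreover have "st_cut G s t (C1!0)" using C1m assms(4) unfolding min_cuts_def by auto
    ultimately show False using \<open>s = t\<close> unfolding st_cut_def by auto
  qed
  have nonempty: "filter (\<lambda>x. x \<in> C1!i \<union> C2!i) p \<noteq> []" if "i < k" "p \<in> P" for i p
  proof -
    have "st_cut G s t (C1!i)" using C1m that unfolding min_cuts_def by auto
    then have "set p \<inter> C1!i \<noteq> {}" using apP that unfolding st_cut_def by blast
    then show ?thesis by (auto simp: filter_empty_conv)
  qed
  have lenJ: "length (tup_join P C1 C2) = k" and nthJ: "\<forall>i<k. tup_join P C1 C2 ! i = S_max P (C1!i \<union> C2!i)"
    by (simp_all add: tup_join_def C1m C2m)
  have lenM: "length (tup_meet P C1 C2) = k" and nthM: "\<forall>i<k. tup_meet P C1 C2 ! i = S_min P (C1!i \<union> C2!i)"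
    by (simp_all add: tup_meet_def C1m C2m)
  have muJ: "mu e (tup_join P C1 C2) = card {i. i < k \<and> e \<in> S_max P (C1!i \<union> C2!i)}"
    unfolding mu_def lenJ using nthJ by (intro arg_cong[where f=card]) auto
  have muM: "mu e (tup_meet P C1 C2) = card {i. i < k \<and> e \<in> S_min P (C1!i \<union> C2!i)}"
    unfolding mu_def lenM using nthM by (intro arg_cong[where f=card]) auto
  have mu1: "mu e C1 = card {i. i < k \<and> e \<in> C1!i}" unfolding mu_def C1m(1) ..
  have mu2: "mu e C2 = card {i. i < k \<and> e \<in> C2!i}" unfolding mu_def C2m(1) ..
  have inpathJ: "\<exists>p\<in>P. e = last (filter (\<lambda>x. x \<in> C1!i \<union> C2!i) p) \<and> e \<in> set p"
    if "i < k" "e \<in> S_max P (C1!i \<union> C2!i)" for i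
  proof -
    from that obtain p where p: "p \<in> P" "e = last (filter (\<lambda>x. x \<in> C1!i \<union> C2!i) p)"
      unfolding S_max_def by blast
    then have "e \<in> set (filter (\<lambda>x. x \<in> C1!i \<union> C2!i) p)" using nonempty[OF that(1) p(1)] last_in_set by metis
    then show ?thesis using p by auto
  qed
  have inpathM: "\<exists>p\<in>P. e = hd (filter (\<lambda>x. x \<in> C1!i \<union> C2!i) p) \<and> e \<in> set p"
    if "i < k" "e \<in> S_min P (C1!i \<union> C2!i)" for i
  proof -
    from that obtain p where p: "p \<in> P" "e = hd (filter (\<lambda>x. x \<in> C1!i \<union> C2!i) p)"
      unfolding S_min_def by blast
    then have "e \<in> set (filter (\<lambda>x. x \<in> C1!i \<union> C2!i) p)" using nonempty[OF that(1) p(1)] hd_in_set by metis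
    then show ?thesis using p by auto
  qed
  show ?thesis
  proof (cases "\<exists>p0\<in>P. e \<in> set p0")
    case False
    then have E1: "{i. i < k \<and> e \<in> S_max P (C1!i \<union> C2!i)} = {}" and E2: "{i. i < k \<and> e \<in> S_min P (C1!i \<union> C2!i)} = {}"
      using inpathJ inpathM by blast+
    show ?thesis unfolding muJ muM E1 E2 by simp
  next
    case True
    then obtain p0 where p0: "p0 \<in> P" "e \<in> set p0" by blast
    obtain f1 where f1: "\<forall>i<k. set p0 \<inter> C1!i = {f1 i}" "\<forall>i j. i < j \<and> j < k \<longrightarrow> pos p0 (f1 i) \<le> pos p0 (f1 j)"
      using path_pos[OF fin assms(2) st assms(5) assms(6) p0(1)] by blast
    obtain f2 where f2: "\<forall>i<k. set p0 \<inter> C2!i = {f2 i}" "\<forall>i j. i < j \<and> j < k \<longrightarrow> pos p0 (f2 i) \<le> pos p0 (f2 j)"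
      using path_pos[OF fin assms(2) st assms(5) assms(7) p0(1)] by blast
    define a where "a i = pos p0 (f1 i)" for i
    define b where "b i = pos p0 (f2 i)" for i
    define c where "c = pos p0 e"
    have dp: "distinct p0" using apP p0 distinct_verts_imp_distinct unfolding apath_def by blast
    have only: "p = p0" if "p \<in> P" "e \<in> set p" for p
      using ed that p0 unfolding edge_disjoint_paths_def by blast
    have f1in: "f1 i \<in> set p0" "f1 i \<in> C1!i" if "i < k" for i using f1 that by auto
    have f2in: "f2 i \<in> set p0" "f2 i \<in> C2!i" if "i < k" for i using f2 that by auto
    have A: "e \<in> C1!i \<longleftrightarrow> a i = c" if "i < k" for i
    proof -
      have "e \<in> C1!i \<longleftrightarrow> e = f1 i" using f1(1) that p0(2) by auto
      also have "\<dots> \<longleftrightarrow> a i = c" unfolding a_def c_def using pos_inj[OF f1in(1)[OF that] p0(2)] by auto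
      finally show ?thesis .
    qed
    have B: "e \<in> C2!i \<longleftrightarrow> b i = c" if "i < k" for i
    proof -
      have "e \<in> C2!i \<longleftrightarrow> e = f2 i" using f2(1) that p0(2) by auto
      also have "\<dots> \<longleftrightarrow> b i = c" unfolding b_def c_def using pos_inj[OF f2in(1)[OF that] p0(2)] by auto
      finally show ?thesis .
    qed
    have two: "x \<in> set p0 \<inter> (C1!i \<union> C2!i) \<longleftrightarrow> x = f1 i \<or> x = f2 i" if "i < k" for i x
      using f1(1) f2(1) that by blast
    have ej: "e = p0 ! j \<longleftrightarrow> c = j" if "j < length p0" for j
      unfolding c_def using pos_nth[OF dp that] pos_in(2)[OF p0(2)] by auto
    have ai: "a i < length p0" "p0 ! a i = f1 i" if "i < k" for i
      unfolding a_def using pos_in[OF f1in(1)[OF that]] by auto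
    have bi: "b i < length p0" "p0 ! b i = f2 i" if "i < k" for i
      unfolding b_def using pos_in[OF f2in(1)[OF that]] by auto
    have Jc: "e \<in> S_max P (C1!i \<union> C2!i) \<longleftrightarrow> max (a i) (b i) = c" if i: "i < k" for i
    proof -
      let ?Q = "\<lambda>x. x \<in> C1!i \<union> C2!i"
      have "\<exists>j<length p0. ?Q (p0!j)" using ai[OF i] f1in[OF i] by auto
      then obtain j where j: "j < length p0" "?Q (p0!j)" "\<forall>j'. j < j' \<and> j' < length p0 \<longrightarrow> \<not> ?Q (p0!j')"
          "last (filter ?Q p0) = p0!j"
        using last_filter_nth[of p0 ?Q] by blast
      have "p0!j = f1 i \<or> p0!j = f2 i" using two[OF i, of "p0!j"] j by auto
      then have j1: "j = a i \<or> j = b i" using pos_nth[OF dp j(1)] unfolding a_def b_def by auto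
      have "a i \<le> j" using j(3) ai[OF i] f1in[OF i] by (metis UnI1 not_le)
      moreover have "b i \<le> j" using j(3) bi[OF i] f2in[OF i] by (metis UnI2 not_le)
      ultimately have jm: "j = max (a i) (b i)" using j1 by auto
      have "e \<in> S_max P (C1!i \<union> C2!i) \<longleftrightarrow> e = last (filter ?Q p0)"
      proof
        assume "e \<in> S_max P (C1!i \<union> C2!i)"
        then obtain p where "p \<in> P" "e = last (filter ?Q p)" "e \<in> set p" using inpathJ[OF i] by blast
        then show "e = last (filter ?Q p0)" using only by blast
      next
        assume "e = last (filter ?Q p0)"
        then show "e \<in> S_max P (C1!i \<union> C2!i)" unfolding S_max_def using p0(1) by blast
      qed
      also have "\<dots> \<longleftrightarrow> c = j" using j(4) ej[OF j(1)] by simp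
      finally show ?thesis using jm by auto
    qed
    have Mc: "e \<in> S_min P (C1!i \<union> C2!i) \<longleftrightarrow> min (a i) (b i) = c" if i: "i < k" for i
    proof -
      let ?Q = "\<lambda>x. x \<in> C1!i \<union> C2!i"
      have "\<exists>j<length p0. ?Q (p0!j)" using ai[OF i] f1in[OF i] by auto
      then obtain j where j: "j < length p0" "?Q (p0!j)" "\<forall>j'<j. \<not> ?Q (p0!j')"
          "hd (filter ?Q p0) = p0!j"
        using hd_filter_nth[of p0 ?Q] by blast
      have "p0!j = f1 i \<or> p0!j = f2 i" using two[OF i, of "p0!j"] j by auto
      then have j1: "j = a i \<or> j = b i" using pos_nth[OF dp j(1)] unfolding a_def b_def by auto
      have "j \<le> a i" using j(3) ai[OF i] f1in[OF i] by (metis UnI1 not_le)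
      moreover have "j \<le> b i" using j(3) bi[OF i] f2in[OF i] by (metis UnI2 not_le)
      ultimately have jm: "j = min (a i) (b i)" using j1 by auto
      have "e \<in> S_min P (C1!i \<union> C2!i) \<longleftrightarrow> e = hd (filter ?Q p0)"
      proof
        assume "e \<in> S_min P (C1!i \<union> C2!i)"
        then obtain p where "p \<in> P" "e = hd (filter ?Q p)" "e \<in> set p" using inpathM[OF i] by blast
        then show "e = hd (filter ?Q p0)" using only by blast
      next
        assume "e = hd (filter ?Q p0)"
        then show "e \<in> S_min P (C1!i \<union> C2!i)" unfolding S_min_def using p0(1) by blast
      qed
      also have "\<dots> \<longleftrightarrow> c = j" using j(4) ej[OF j(1)] by simp
      finally show ?thesis using jm by auto
    qed
    have ma: "\<forall>i j. i < j \<and> j < k \<longrightarrow> a i \<le> a j" using f1(2) unfolding a_def by blast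
    have mb: "\<forall>i j. i < j \<and> j < k \<longrightarrow> b i \<le> b j" using f2(2) unfolding b_def by blast
    have e1: "mu e C1 = card {i. i < k \<and> a i = c}" unfolding mu1 using A by (intro arg_cong[where f=card]) auto
    have e2: "mu e C2 = card {i. i < k \<and> b i = c}" unfolding mu2 using B by (intro arg_cong[where f=card]) auto
    have eJ: "mu e (tup_join P C1 C2) = card {i. i < k \<and> max (a i) (b i) = c}"
      unfolding muJ using Jc by (intro arg_cong[where f=card]) auto
    have eM: "mu e (tup_meet P C1 C2) = card {i. i < k \<and> min (a i) (b i) = c}"
      unfolding muM using Mc by (intro arg_cong[where f=card]) auto
    show ?thesis unfolding e1 e2 eJ eM using comb_max[OF ma mb, of c] comb_min[OF ma mb, of c] by simp
  qed
qed

end
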